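(* Let $Y=\beta+\sigma\xi\in\mathbb{R}^p$ with $\beta\in\mathbb{R}^p$ unknown, $\sigma>0$ and $\xi\sim\mathcal{N}(0,\mathbb{I}_p)$. For any $a>0$, $q\ge1$, and $s$ with $s<p/2$ and $s\ge 8q\log\log(p)$, there is $C_q>0$ (depending only on $q$) such that $$\inf_{\hat\beta}\sup_{\beta\in\Omega^p_{s,a}}\mathbf{E}_\beta\big(\|\hat\beta-\beta\|_q^q\big)\ \ge\ C_q\,\Phi(a),$$ where the infimum is over all estimators $\hat\beta$.
   Context: $\Omega^p_{s,a}=\{\beta\in\mathbb{R}^p:\ |\beta|_0\le s\ \text{and}\ |\beta_i|\ge a\ \forall i\in S_\beta\}$, where $|\beta|_0$ is the number of nonzero entries and $S_\beta$ the set of indices of nonzero entries; $\mathbf{E}_\beta$ is expectation when the true parameter is $\beta$; $\|\cdot\|_q$ is the $\ell_q$ norm. $\sigma_q:=(\mathbf{E}|\zeta|^q)^{1/q}$ for $\zeta\sim\mathcal{N}(0,\sigma^2)$. Let $\varepsilon$ be standard Gaussian, $t(a):=\frac a2+\frac{\sigma^2\log(\frac ps-1)}{a}$, $t^*:=\sigma\sqrt{2\log(\frac ps-1)}$, and $\psi(p,s,a,\sigma):=(p-s)\mathbf{P}(\sigma\varepsilon>t(a))+s\,\mathbf{P}(\sigma\varepsilon>a-t(a))$. Define $\Phi(a):=a^q\psi(p,s,a,\sigma)\vee\sigma_q^qs$ if $a\ge t^*$, and $\Phi(a):=s\sigma^q\big(2\log(\frac ps-1)\big)^{q/2}$ otherwise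 ($x\vee y=\max(x,y)$). *)

theory Defs
  imports "HOL-Probability.Probability"
begin

text \<open>Vectors in R^p are functions nat => real, only coordinates i < p matter.\<close>

definition std_gauss :: "real measure" where
  "std_gauss = density lborel std_normal_density"

definition gauss_vec :: "nat \<Rightarrow> (nat \<Rightarrow> real) measure" where
  "gauss_vec p = PiM {..<p} (\<lambda>_. std_gauss)"

definition Omega :: "nat \<Rightarrow> nat \<Rightarrow> real \<Rightarrow> (nat \<Rightarrow> real) set" where
  "Omega p s a = {\<beta>. (\<forall>i. p \<le> i \<longrightarrow> \<beta> i = 0) \<and> card {i. \<beta> i \<noteq> 0} \<le> s
                      \<and> (\<forall>i. \<beta> i \<noteq> 0 \<longrightarrow> \<bar>\<beta> i\<bar> \<ge> a)}"

definition estimators :: "nat \<Rightarrow> ((nat \<Rightarrow> real) \<Rightarrow> (nat \<Rightarrow> real)) set" where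
  "estimators p = {est. \<forall>i<p. (\<lambda>y. est y i) \<in> borel_measurable (PiM {..<p} (\<lambda>_. lborel))}"

definition risk :: "nat \<Rightarrow> real \<Rightarrow> real \<Rightarrow> ((nat \<Rightarrow> real) \<Rightarrow> (nat \<Rightarrow> real)) \<Rightarrow> (nat \<Rightarrow> real) \<Rightarrow> ennreal" where
  "risk p q \<sigma> est \<beta> =
     (\<integral>\<^sup>+ \<xi>. ennreal (\<Sum>i<p. \<bar>est (restrict (\<lambda>j. \<beta> j + \<sigma> * \<xi> j) {..<p}) i - \<beta> i\<bar> powr q) \<partial>gauss_vec p)"

definition sigma_q :: "real \<Rightarrow> real \<Rightarrow> real" where
  "sigma_q q \<sigma> = (\<integral>x. \<bar>x\<bar> powr q * normal_density 0 \<sigma> x \<partial>lborel) powr (1 / q)"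

definition gauss_tail :: "real \<Rightarrow> real \<Rightarrow> real" where
  "gauss_tail \<sigma> t = measure std_gauss {x. \<sigma> * x > t}"

definition t_fun :: "nat \<Rightarrow> nat \<Rightarrow> real \<Rightarrow> real \<Rightarrow> real" where
  "t_fun p s a \<sigma> = a / 2 + \<sigma>\<^sup>2 * ln (real p / real s - 1) / a"

definition t_star :: "nat \<Rightarrow> nat \<Rightarrow> real \<Rightarrow> real" where
  "t_star p s \<sigma> = \<sigma> * sqrt (2 * ln (real p / real s - 1))"

definition psi :: "nat \<Rightarrow> nat \<Rightarrow> real \<Rightarrow> real \<Rightarrow> real" where
  "psi p s a \<sigma> = real (p - s) * gauss_tail \<sigma> (t_fun p s a \<sigma>)
                 + real s * gauss_tail \<sigma> (a - t_fun p s a \<sigma>)"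

definition Phi :: "nat \<Rightarrow> nat \<Rightarrow> real \<Rightarrow> real \<Rightarrow> real \<Rightarrow> real" where
  "Phi p s q \<sigma> a =
     (if a \<ge> t_star p s \<sigma>
      then max (a powr q * psi p s a \<sigma>) (sigma_q q \<sigma> powr q * real s)
      else real s * \<sigma> powr q * (2 * ln (real p / real s - 1)) powr (q / 2))"

end

theory Submission
  imports Defs
begin



lemma pt_ineq:
  fixes A B K u v w0 w1 :: real
  assumes "0 \<le> A" "0 \<le> B" "0 \<le> u" "0 \<le> v" "0 \<le> w0" "0 \<le> w1" "K \<le> max A B"
  shows "K * min (w0 * u) (w1 * v) \<le> w0 * (u * A) + w1 * (v * B)"
proof -
  have m0: "0 \<le> min (w0 * u) (w1 * v)" using assms by auto
  have "K * min (w0 * u) (w1 * v) \<le> max A B * min (w0 * u) (w1 * v)"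
    using assms m0 by (intro mult_right_mono) auto
  also have "\<dots> \<le> w0 * (u * A) + w1 * (v * B)"
  proof (cases "A \<le> B")
    case True
    then have "max A B * min (w0 * u) (w1 * v) \<le> B * (w1 * v)" using assms
      by (intro mult_mono) auto
    moreover have "0 \<le> w0 * (u * A)" using assms by auto
    ultimately show ?thesis by (simp add: algebra_simps)
  next
    case False
    then have "max A B * min (w0 * u) (w1 * v) \<le> A * (w0 * u)" using assms
      by (intro mult_mono) auto
    moreover have "0 \<le> w1 * (v * B)" using assms by auto
    ultimately show ?thesis by (simp add: algebra_simps)
  qed
  finally show ?thesis .
qed

lemma max_powr:
  fixes u v q :: real
  assumes "0 \<le> u" "0 \<le> v" "0 < q"
  shows "(max u v) powr q = max (u powr q) (v powr q)"
proof (cases "u \<le> v")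
  case True
  then have "u powr q \<le> v powr q" using assms by (intro powr_mono2) auto
  then show ?thesis using True by (simp add: max_def)
next
  case False
  then have "v powr q \<le> u powr q" using assms by (intro powr_mono2) auto
  then show ?thesis using False by (auto simp: max_def)
qed

lemma one_dim:
  fixes d :: "real \<Rightarrow> real"
  assumes d[measurable]: "d \<in> borel_measurable borel" and \<sigma>: "\<sigma> > 0" and m: "m0 < m1"
    and w: "0 \<le> w0" "0 \<le> w1" and q: "q > 0"
  shows "ennreal (((m1-m0)/2) powr q) * (\<integral>\<^sup>+x. ennreal (min (w0 * std_normal_density x) (w1 * std_normal_density (x - (m1-m0)/\<sigma>))) \<partial>lborel)
     \<le> ennreal w0 * (\<integral>\<^sup>+x. ennreal (\<bar>d (m0 + \<sigma>*x) - m0\<bar> powr q) \<partial>std_gauss)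
       + ennreal w1 * (\<integral>\<^sup>+x. ennreal (\<bar>d (m1 + \<sigma>*x) - m1\<bar> powr q) \<partial>std_gauss)"
proof -
  define c where "c = (m1-m0)/\<sigma>"
  have e0: "(\<integral>\<^sup>+x. ennreal (\<bar>d (m0 + \<sigma>*x) - m0\<bar> powr q) \<partial>std_gauss)
      = (\<integral>\<^sup>+x. ennreal (std_normal_density x * \<bar>d (m0 + \<sigma>*x) - m0\<bar> powr q) \<partial>lborel)"
    unfolding std_gauss_def by (subst nn_integral_density) (auto simp: ennreal_mult)
  have "(\<integral>\<^sup>+x. ennreal (\<bar>d (m1 + \<sigma>*x) - m1\<bar> powr q) \<partial>std_gauss)
      = (\<integral>\<^sup>+x. ennreal (std_normal_density x * \<bar>d (m1 + \<sigma>*x) - m1\<bar> powr q) \<partial>lborel)"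
    unfolding std_gauss_def by (subst nn_integral_density) (auto simp: ennreal_mult)
  also have "\<dots> = (\<integral>\<^sup>+x. ennreal (std_normal_density (-c + x) * \<bar>d (m1 + \<sigma>*(-c + x)) - m1\<bar> powr q) \<partial>lborel)"
    by (subst nn_integral_real_affine[where c=1 and t="-c"]) auto
  also have "\<dots> = (\<integral>\<^sup>+x. ennreal (std_normal_density (x - c) * \<bar>d (m0 + \<sigma>*x) - m1\<bar> powr q) \<partial>lborel)"
  proof -
    have "\<And>x. m1 + \<sigma>*(-c + x) = m0 + \<sigma>*x" using \<sigma> by (simp add: c_def field_simps)
    then show ?thesis by simp
  qed
  finally have e1: "(\<integral>\<^sup>+x. ennreal (\<bar>d (m1 + \<sigma>*x) - m1\<bar> powr q) \<partial>std_gauss)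
     = (\<integral>\<^sup>+x. ennreal (std_normal_density (x - c) * \<bar>d (m0 + \<sigma>*x) - m1\<bar> powr q) \<partial>lborel)" .
  have "ennreal w0 * (\<integral>\<^sup>+x. ennreal (\<bar>d (m0 + \<sigma>*x) - m0\<bar> powr q) \<partial>std_gauss)
       + ennreal w1 * (\<integral>\<^sup>+x. ennreal (\<bar>d (m1 + \<sigma>*x) - m1\<bar> powr q) \<partial>std_gauss)
     = (\<integral>\<^sup>+x. ennreal (w0 * (std_normal_density x * \<bar>d (m0 + \<sigma>*x) - m0\<bar> powr q)
                      + w1 * (std_normal_density (x - c) * \<bar>d (m0 + \<sigma>*x) - m1\<bar> powr q)) \<partial>lborel)"
  proof -
    have "(\<integral>\<^sup>+x. ennreal (w0 * (std_normal_density x * \<bar>d (m0 + \<sigma>*x) - m0\<bar> powr q)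
                      + w1 * (std_normal_density (x - c) * \<bar>d (m0 + \<sigma>*x) - m1\<bar> powr q)) \<partial>lborel)
       = (\<integral>\<^sup>+x. ennreal w0 * ennreal (std_normal_density x * \<bar>d (m0 + \<sigma>*x) - m0\<bar> powr q)
                      + ennreal w1 * ennreal (std_normal_density (x - c) * \<bar>d (m0 + \<sigma>*x) - m1\<bar> powr q) \<partial>lborel)"
      using w by (intro nn_integral_cong) (simp add: ennreal_plus[symmetric] ennreal_mult)
    also have "\<dots> = ennreal w0 * (\<integral>\<^sup>+x. ennreal (std_normal_density x * \<bar>d (m0 + \<sigma>*x) - m0\<bar> powr q) \<partial>lborel)
       + ennreal w1 * (\<integral>\<^sup>+x. ennreal (std_normal_density (x - c) * \<bar>d (m0 + \<sigma>*x) - m1\<bar> powr q) \<partial>lborel)"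
      by (subst nn_integral_add) (auto simp: nn_integral_cmult)
    finally show ?thesis unfolding e0 e1 by simp
  qed
  also have "\<dots> \<ge> (\<integral>\<^sup>+x. ennreal (((m1-m0)/2) powr q * min (w0 * std_normal_density x) (w1 * std_normal_density (x - c))) \<partial>lborel)"
  proof (rule nn_integral_mono, rule ennreal_leI, rule pt_ineq)
    fix x
    let ?y = "d (m0 + \<sigma>*x)"
    have "(m1 - m0)/2 \<le> max \<bar>?y - m0\<bar> \<bar>?y - m1\<bar>" by (auto simp: max_def abs_if)
    then have "((m1-m0)/2) powr q \<le> (max \<bar>?y - m0\<bar> \<bar>?y - m1\<bar>) powr q"
      using m q by (intro powr_mono2) auto
    also have "(max \<bar>?y - m0\<bar> \<bar>?y - m1\<bar>) powr q = max (\<bar>?y - m0\<bar> powr q) (\<bar>?y - m1\<bar> powr q)"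
      using q by (intro max_powr) auto
    finally show "((m1-m0)/2) powr q \<le> max (\<bar>?y - m0\<bar> powr q) (\<bar>?y - m1\<bar> powr q)" .
  qed (use w in auto)
  moreover have "ennreal (((m1-m0)/2) powr q) * (\<integral>\<^sup>+x. ennreal (min (w0 * std_normal_density x) (w1 * std_normal_density (x - c))) \<partial>lborel)
    = (\<integral>\<^sup>+x. ennreal (((m1-m0)/2) powr q * min (w0 * std_normal_density x) (w1 * std_normal_density (x - c))) \<partial>lborel)"
    using w by (subst nn_integral_cmult[symmetric]) (auto simp: ennreal_mult)
  ultimately show ?thesis unfolding c_def by simp
qed


lemma prob_std_gauss: "prob_space std_gauss"
  unfolding std_gauss_def by (rule prob_space_normal_density) simp

lemma sets_std_gauss[measurable_cong]: "sets std_gauss = sets borel"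
  unfolding std_gauss_def by simp

lemma sets_gauss_vec: "sets (gauss_vec p) = sets (PiM {..<p} (\<lambda>_. lborel))"
  unfolding gauss_vec_def by (rule sets_PiM_cong) (auto simp: sets_std_gauss)

definition ell :: "nat \<Rightarrow> real \<Rightarrow> real \<Rightarrow> ((nat\<Rightarrow>real)\<Rightarrow>(nat\<Rightarrow>real)) \<Rightarrow> (nat\<Rightarrow>real) \<Rightarrow> nat \<Rightarrow> ennreal" where
  "ell p q \<sigma> est \<beta> i = (\<integral>\<^sup>+\<xi>. ennreal (\<bar>est (restrict (\<lambda>j. \<beta> j + \<sigma> * \<xi> j) {..<p}) i - \<beta> i\<bar> powr q) \<partial>gauss_vec p)"

lemma meas_Y: "(\<lambda>\<xi>. restrict (\<lambda>j. \<beta> j + \<sigma> * \<xi> j) {..<p}) \<in> measurable (gauss_vec p) (PiM {..<p} (\<lambda>_. lborel))"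
proof -
  have "(\<lambda>\<xi>. restrict (\<lambda>j. \<beta> j + \<sigma> * \<xi> j) {..<p}) \<in> measurable (PiM {..<p} (\<lambda>_. lborel)) (PiM {..<p} (\<lambda>_. lborel))"
    by measurable
  then show ?thesis by (subst measurable_cong_sets[OF sets_gauss_vec[of p] refl])
qed

lemma meas_F:
  assumes "est \<in> estimators p" "i < p"
  shows "(\<lambda>\<xi>. ennreal (\<bar>est (restrict (\<lambda>j. \<beta> j + \<sigma> * \<xi> j) {..<p}) i - c\<bar> powr q)) \<in> borel_measurable (gauss_vec p)"
proof -
  have e: "(\<lambda>y. est y i) \<in> borel_measurable (PiM {..<p} (\<lambda>_. lborel))"
    using assms unfolding estimators_def by auto
  have "(\<lambda>\<xi>. est (restrict (\<lambda>j. \<beta> j + \<sigma> * \<xi> j) {..<p}) i) \<in> borel_measurable (gauss_vec p)"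
    using measurable_comp[OF meas_Y e] by (simp add: o_def)
  then show ?thesis by measurable
qed

lemma coord:
  assumes est: "est \<in> estimators p" and i: "i < p" and \<sigma>: "\<sigma> > 0" and m: "m0 < m1"
    and w: "0 \<le> w0" "0 \<le> w1" and q: "q > 0" and b: "\<beta> i = m0"
  shows "ennreal (((m1-m0)/2) powr q) * (\<integral>\<^sup>+x. ennreal (min (w0 * std_normal_density x) (w1 * std_normal_density (x - (m1-m0)/\<sigma>))) \<partial>lborel)
     \<le> ennreal w0 * ell p q \<sigma> est \<beta> i + ennreal w1 * ell p q \<sigma> est (\<beta>(i := m1)) i"
proof -
  let ?K = "ennreal (((m1-m0)/2) powr q) * (\<integral>\<^sup>+x. ennreal (min (w0 * std_normal_density x) (w1 * std_normal_density (x - (m1-m0)/\<sigma>))) \<partial>lborel)"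
  interpret P: product_prob_space "\<lambda>_. std_gauss" using prob_std_gauss
    by (simp add: product_prob_space_def product_prob_space_axioms_def product_sigma_finite_def prob_space_imp_sigma_finite)
  define I' where "I' = {..<p} - {i}"
  have I': "finite I'" "i \<notin> I'" "insert i I' = {..<p}" using i by (auto simp: I'_def)
  define G where "G = (\<lambda>\<xi>. ennreal w0 * ennreal (\<bar>est (restrict (\<lambda>j. \<beta> j + \<sigma> * \<xi> j) {..<p}) i - \<beta> i\<bar> powr q)
     + ennreal w1 * ennreal (\<bar>est (restrict (\<lambda>j. (\<beta>(i := m1)) j + \<sigma> * \<xi> j) {..<p}) i - (\<beta>(i := m1)) i\<bar> powr q))"
  have Gm: "G \<in> borel_measurable (gauss_vec p)"
    unfolding G_def using meas_F[OF est i] by measurable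
  have "ennreal w0 * ell p q \<sigma> est \<beta> i + ennreal w1 * ell p q \<sigma> est (\<beta>(i := m1)) i = integral\<^sup>N (gauss_vec p) G"
    unfolding ell_def G_def using meas_F[OF est i]
    by (subst nn_integral_add) (auto simp: nn_integral_cmult)
  also have "\<dots> = integral\<^sup>N (PiM (insert i I') (\<lambda>_. std_gauss)) G"
    unfolding gauss_vec_def I' ..
  also have "\<dots> = (\<integral>\<^sup>+ x. (\<integral>\<^sup>+ y. G (x(i := y)) \<partial>std_gauss) \<partial>(PiM I' (\<lambda>_. std_gauss)))"
    using Gm unfolding gauss_vec_def I'(3)[symmetric]
    by (intro P.product_nn_integral_insert I') 
  also have "\<dots> \<ge> (\<integral>\<^sup>+ x. ?K \<partial>(PiM I' (\<lambda>_. std_gauss)))"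
  proof (rule nn_integral_mono)
    fix x
    define D where "D = (\<lambda>z. restrict (\<lambda>j. if j = i then z else \<beta> j + \<sigma> * x j) {..<p})"
    define d where "d = (\<lambda>z. est (D z) i)"
    have Dm: "D \<in> measurable borel (PiM {..<p} (\<lambda>_. lborel))"
      unfolding D_def by measurable
    have e: "(\<lambda>y. est y i) \<in> borel_measurable (PiM {..<p} (\<lambda>_. lborel))"
      using est i unfolding estimators_def by auto
    have dm: "d \<in> borel_measurable borel"
      using measurable_comp[OF Dm e] by (simp add: d_def o_def)
    have y0: "restrict (\<lambda>j. \<beta> j + \<sigma> * (x(i := y)) j) {..<p} = D (m0 + \<sigma> * y)" for y
      using b by (auto simp: D_def)
    have y1: "restrict (\<lambda>j. (\<beta>(i := m1)) j + \<sigma> * (x(i := y)) j) {..<p} = D (m1 + \<sigma> * y)" for y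
      by (auto simp: D_def)
    have "(\<integral>\<^sup>+ y. G (x(i := y)) \<partial>std_gauss)
       = (\<integral>\<^sup>+ y. ennreal w0 * ennreal (\<bar>d (m0 + \<sigma> * y) - m0\<bar> powr q) + ennreal w1 * ennreal (\<bar>d (m1 + \<sigma> * y) - m1\<bar> powr q) \<partial>std_gauss)"
      unfolding G_def y0 y1 d_def using b by simp
    also have "\<dots> = ennreal w0 * (\<integral>\<^sup>+x. ennreal (\<bar>d (m0 + \<sigma>*x) - m0\<bar> powr q) \<partial>std_gauss)
       + ennreal w1 * (\<integral>\<^sup>+x. ennreal (\<bar>d (m1 + \<sigma>*x) - m1\<bar> powr q) \<partial>std_gauss)"
      using dm by (subst nn_integral_add) (auto simp: nn_integral_cmult)
    also have "\<dots> \<ge> ?K"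
      by (rule one_dim[OF dm \<sigma> m w q])
    finally show "?K \<le> (\<integral>\<^sup>+ y. G (x(i := y)) \<partial>std_gauss)" .
  qed
  also have "(\<integral>\<^sup>+ x. ?K \<partial>(PiM I' (\<lambda>_. std_gauss))) = ?K"
  proof -
    interpret Q: prob_space "PiM I' (\<lambda>_. std_gauss)"
      by (intro prob_space_PiM prob_std_gauss)
    show ?thesis by (simp add: Q.emeasure_space_1)
  qed
  finally show ?thesis by (simp only:)
qed




lemma emeasure_std_gauss: "A \<in> sets borel \<Longrightarrow> emeasure std_gauss A = (\<integral>\<^sup>+x. ennreal (std_normal_density x) * indicator A x \<partial>lborel)"
  unfolding std_gauss_def by (subst emeasure_density) auto

lemma gauss_tail_emeasure: "\<sigma> > 0 \<Longrightarrow> ennreal (gauss_tail \<sigma> t) = (\<integral>\<^sup>+x. ennreal (std_normal_density x) * indicator {t/\<sigma><..} x \<partial>lborel)"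
proof -
  assume \<sigma>: "\<sigma> > 0"
  interpret prob_space std_gauss by (rule prob_std_gauss)
  have "{x. \<sigma> * x > t} = {t/\<sigma><..}" using \<sigma> by (auto simp: field_simps)
  then have "ennreal (gauss_tail \<sigma> t) = emeasure std_gauss {t/\<sigma><..}"
    unfolding gauss_tail_def by (simp add: emeasure_eq_measure)
  then show ?thesis by (simp add: emeasure_std_gauss)
qed

lemma min_dens:
  fixes w0 w1 c L x :: real
  assumes w1: "w1 > 0" and w0: "w0 = w1 * exp L" and c: "c > 0"
  shows "x > c/2 + L/c \<Longrightarrow> min (w0 * std_normal_density x) (w1 * std_normal_density (x - c)) = w0 * std_normal_density x"
    and "x \<le> c/2 + L/c \<Longrightarrow> min (w0 * std_normal_density x) (w1 * std_normal_density (x - c)) = w1 * std_normal_density (x - c)"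
proof -
  define K where "K = 1 / sqrt (2 * pi)"
  have K: "K > 0" by (simp add: K_def)
  have ee: "exp (- x\<^sup>2 / 2 + L) = exp (- x\<^sup>2 / 2) * exp L" by (rule exp_add)
  have e0: "w0 * std_normal_density x = w1 * K * exp (- x\<^sup>2 / 2 + L)"
    unfolding ee by (simp add: std_normal_density_def K_def w0)
  have ex: "- (x - c)\<^sup>2 / 2 = - x\<^sup>2 / 2 + (c * x - c\<^sup>2/2)" by (simp add: power2_eq_square field_simps)
  have e1: "w1 * std_normal_density (x - c) = w1 * K * exp (- x\<^sup>2 / 2 + (c * x - c\<^sup>2/2))"
    unfolding ex[symmetric] by (simp add: std_normal_density_def K_def)
  have pos: "w1 * K > 0" using w1 K by simp
  have cc: "c * (c/2 + L/c) = c\<^sup>2/2 + L" using c by (simp add: field_simps power2_eq_square)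
  {
    assume "x > c/2 + L/c"
    then have "c * x > c * (c/2 + L/c)" using c by simp
    then have "L < c * x - c\<^sup>2/2" unfolding cc by linarith
    then have "exp (- x\<^sup>2 / 2 + L) \<le> exp (- x\<^sup>2 / 2 + (c * x - c\<^sup>2/2))" by simp
    then have "w1 * K * exp (- x\<^sup>2 / 2 + L) \<le> w1 * K * exp (- x\<^sup>2 / 2 + (c * x - c\<^sup>2/2))"
      using pos by (intro mult_left_mono) auto
    then show "min (w0 * std_normal_density x) (w1 * std_normal_density (x - c)) = w0 * std_normal_density x"
      unfolding e0 e1 by (rule min_absorb1)
  }
  {
    assume "x \<le> c/2 + L/c"
    then have "c * x \<le> c * (c/2 + L/c)" using c by (intro mult_left_mono) auto
    then have "c * x - c\<^sup>2/2 \<le> L" unfolding cc by linarith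
    then have "exp (- x\<^sup>2 / 2 + (c * x - c\<^sup>2/2)) \<le> exp (- x\<^sup>2 / 2 + L)" by simp
    then have "w1 * K * exp (- x\<^sup>2 / 2 + (c * x - c\<^sup>2/2)) \<le> w1 * K * exp (- x\<^sup>2 / 2 + L)"
      using pos by (intro mult_left_mono) auto
    then show "min (w0 * std_normal_density x) (w1 * std_normal_density (x - c)) = w1 * std_normal_density (x - c)"
      unfolding e0 e1 by (rule min_absorb2)
  }
qed

lemma BE_main:
  fixes p s :: nat
  assumes \<sigma>: "\<sigma> > 0" and a: "a > 0" and s: "1 \<le> s" "s < p"
  shows "ennreal (psi p s a \<sigma>) \<le> ennreal (real p) *
     (\<integral>\<^sup>+x. ennreal (min ((1 - s/p) * std_normal_density x) ((s/p) * std_normal_density (x - a/\<sigma>))) \<partial>lborel)"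
proof -
  define L where "L = ln (real p / real s - 1)"
  define c where "c = a/\<sigma>"
  define \<tau> where "\<tau> = c/2 + L/c"
  define w0 where "w0 = 1 - real s / real p"
  define w1 where "w1 = real s / real p"
  have c: "c > 0" using a \<sigma> by (simp add: c_def)
  have pp: "real p > 0" "real s > 0" "real s < real p" using s by auto
  have w1: "w1 > 0" "w1 < 1" using pp by (auto simp: w1_def)
  have "real p / real s - 1 > 0" using pp by (simp add: field_simps)
  then have eL: "exp L = real p / real s - 1" by (simp add: L_def)
  have w0: "w0 = w1 * exp L" unfolding eL w0_def w1_def using pp by (simp add: field_simps)
  have t: "t_fun p s a \<sigma> = \<sigma> * \<tau>"
    unfolding t_fun_def \<tau>_def c_def L_def using a \<sigma> by (simp add: field_simps power2_eq_square)
  have "(\<integral>\<^sup>+x. ennreal (min (w0 * std_normal_density x) (w1 * std_normal_density (x - c))) \<partial>lborel)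
     \<ge> (\<integral>\<^sup>+x. ennreal w0 * (ennreal (std_normal_density x) * indicator {\<tau><..} x)
            + ennreal w1 * (ennreal (std_normal_density (x - c)) * indicator {..\<tau>} x) \<partial>lborel)"
  proof (rule nn_integral_mono)
    fix x
    show "ennreal w0 * (ennreal (std_normal_density x) * indicator {\<tau><..} x)
            + ennreal w1 * (ennreal (std_normal_density (x - c)) * indicator {..\<tau>} x)
        \<le> ennreal (min (w0 * std_normal_density x) (w1 * std_normal_density (x - c)))"
      using min_dens[OF w1(1) w0 c, of x] w1 w0
      by (cases "x > \<tau>") (auto simp: \<tau>_def indicator_def ennreal_mult[symmetric])
  qed
  also have "(\<integral>\<^sup>+x. ennreal w0 * (ennreal (std_normal_density x) * indicator {\<tau><..} x)
            + ennreal w1 * (ennreal (std_normal_density (x - c)) * indicator {..\<tau>} x) \<partial>lborel)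
     = ennreal w0 * (\<integral>\<^sup>+x. ennreal (std_normal_density x) * indicator {\<tau><..} x \<partial>lborel)
       + ennreal w1 * (\<integral>\<^sup>+x. ennreal (std_normal_density (x - c)) * indicator {..\<tau>} x \<partial>lborel)"
    by (subst nn_integral_add) (auto simp: nn_integral_cmult)
  finally have A: "ennreal w0 * (\<integral>\<^sup>+x. ennreal (std_normal_density x) * indicator {\<tau><..} x \<partial>lborel)
       + ennreal w1 * (\<integral>\<^sup>+x. ennreal (std_normal_density (x - c)) * indicator {..\<tau>} x \<partial>lborel)
     \<le> (\<integral>\<^sup>+x. ennreal (min (w0 * std_normal_density x) (w1 * std_normal_density (x - c))) \<partial>lborel)" .
  have B1: "(\<integral>\<^sup>+x. ennreal (std_normal_density x) * indicator {\<tau><..} x \<partial>lborel) = ennreal (gauss_tail \<sigma> (t_fun p s a \<sigma>))"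
    unfolding gauss_tail_emeasure[OF \<sigma>] t using \<sigma> by simp
  have "(\<integral>\<^sup>+x. ennreal (std_normal_density (x - c)) * indicator {..\<tau>} x \<partial>lborel)
      = (\<integral>\<^sup>+x. ennreal (std_normal_density (c + (-1) * x - c)) * indicator {..\<tau>} (c + (-1) * x) \<partial>lborel)"
    by (subst nn_integral_real_affine[where c="-1" and t=c]) auto
  also have "\<dots> = (\<integral>\<^sup>+x. ennreal (std_normal_density x) * indicator {c - \<tau>..} x \<partial>lborel)"
    by (intro nn_integral_cong) (auto simp: std_normal_density_def indicator_def)
  also have "\<dots> \<ge> (\<integral>\<^sup>+x. ennreal (std_normal_density x) * indicator {c - \<tau><..} x \<partial>lborel)"
    by (intro nn_integral_mono) (auto simp: indicator_def)
  finally have B2: "ennreal (gauss_tail \<sigma> (a - t_fun p s a \<sigma>)) \<le> (\<integral>\<^sup>+x. ennreal (std_normal_density (x - c)) * indicator {..\<tau>} x \<partial>lborel)"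
    unfolding gauss_tail_emeasure[OF \<sigma>] t using \<sigma> by (simp add: c_def field_simps)
  have gt: "0 \<le> gauss_tail \<sigma> u" for u unfolding gauss_tail_def by simp
  have "ennreal (psi p s a \<sigma>) = ennreal (real p) * (ennreal w0 * ennreal (gauss_tail \<sigma> (t_fun p s a \<sigma>))
       + ennreal w1 * ennreal (gauss_tail \<sigma> (a - t_fun p s a \<sigma>)))"
  proof -
    have "psi p s a \<sigma> = real p * (w0 * gauss_tail \<sigma> (t_fun p s a \<sigma>) + w1 * gauss_tail \<sigma> (a - t_fun p s a \<sigma>))"
      unfolding psi_def w0_def w1_def using pp s by (simp add: field_simps of_nat_diff)
    moreover have "w0 \<ge> 0" using w1 by (simp add: w0_def w1_def)
    ultimately show ?thesis using w1 gt pp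
      by (simp add: ennreal_mult'' ennreal_mult)
  qed
  also have "\<dots> \<le> ennreal (real p) * (\<integral>\<^sup>+x. ennreal (min (w0 * std_normal_density x) (w1 * std_normal_density (x - c))) \<partial>lborel)"
    using A B1 B2 by (intro mult_left_mono order.trans[OF _ A] add_mono) auto
  finally show ?thesis unfolding w0_def w1_def c_def .
qed



definition W :: "real \<Rightarrow> nat \<Rightarrow> nat set \<Rightarrow> real" where
  "W \<pi> n S = \<pi> ^ card S * (1 - \<pi>) ^ (n - card S)"

lemma W_nonneg: "0 \<le> \<pi> \<Longrightarrow> \<pi> \<le> 1 \<Longrightarrow> 0 \<le> W \<pi> n S"
  by (simp add: W_def)

lemma Pow_insert_split:
  assumes "finite A" "x \<notin> A"
  shows "(\<Sum>S\<in>Pow (insert x A). f S) = (\<Sum>S\<in>Pow A. f S) + (\<Sum>S\<in>Pow A. f (insert x S))"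
proof -
  have d: "Pow A \<inter> insert x ` Pow A = {}" using assms by auto
  have inj: "inj_on (insert x) (Pow A)" using assms by (intro inj_onI) (metis PowD insert_ident subsetD)
  have "(\<Sum>S\<in>Pow (insert x A). f S) = (\<Sum>S\<in>Pow A \<union> insert x ` Pow A. f S)"
    by (simp add: Pow_insert)
  also have "\<dots> = (\<Sum>S\<in>Pow A. f S) + (\<Sum>S\<in>insert x ` Pow A. f S)"
    using assms d by (intro sum.union_disjoint) auto
  also have "(\<Sum>S\<in>insert x ` Pow A. f S) = (\<Sum>S\<in>Pow A. f (insert x S))"
    using inj by (simp add: sum.reindex)
  finally show ?thesis .
qed

lemma bin_sums:
  assumes "finite A"
  shows "(\<Sum>S\<in>Pow A. W \<pi> (card A) S) = 1 \<and> (\<Sum>S\<in>Pow A. real (card S) * W \<pi> (card A) S) = real (card A) * \<pi>"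
  using assms
proof (induction A rule: finite_induct)
  case empty
  then show ?case by (simp add: W_def)
next
  case (insert x A)
  have c1: "card (insert x A) - card S = Suc (card A - card S)" if "S \<in> Pow A" for S
    using insert card_mono[OF insert(1), of S] that by (auto simp: Suc_diff_le)
  have c2: "card (insert x S) = Suc (card S)" if "S \<in> Pow A" for S
    using insert that finite_subset[of S A] by (subst card_insert_disjoint) auto
  have c3: "card (insert x A) - Suc (card S) = card A - card S" if "S \<in> Pow A" for S
    using insert by simp
  have w1: "W \<pi> (Suc (card A)) S = (1 - \<pi>) * W \<pi> (card A) S" if "S \<in> Pow A" for S
    using c1[OF that] insert by (simp add: W_def)
  have w2: "W \<pi> (Suc (card A)) (insert x S) = \<pi> * W \<pi> (card A) S" if "S \<in> Pow A" for S
    using c2[OF that] c3[OF that] insert by (simp add: W_def)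
  have s1: "(\<Sum>S\<in>Pow (insert x A). W \<pi> (Suc (card A)) S) = (\<Sum>S\<in>Pow A. (1 - \<pi>) * W \<pi> (card A) S) + (\<Sum>S\<in>Pow A. \<pi> * W \<pi> (card A) S)"
    by (subst Pow_insert_split[OF insert(1,2)], intro arg_cong2[where f="(+)"] sum.cong refl) (simp_all add: w1 w2)
  have s2: "(\<Sum>S\<in>Pow (insert x A). real (card S) * W \<pi> (Suc (card A)) S)
     = (\<Sum>S\<in>Pow A. (1 - \<pi>) * (real (card S) * W \<pi> (card A) S)) + (\<Sum>S\<in>Pow A. \<pi> * (real (card S) * W \<pi> (card A) S + W \<pi> (card A) S))"
    by (subst Pow_insert_split[OF insert(1,2)], intro arg_cong2[where f="(+)"] sum.cong refl) (simp_all add: w1 w2 c2 algebra_simps)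
  have cI: "card (insert x A) = Suc (card A)" using insert by simp
  have r1: "(\<Sum>S\<in>Pow (insert x A). W \<pi> (card (insert x A)) S) = 1"
    by (subst cI, subst s1) (use insert.IH in \<open>simp add: sum_distrib_left[symmetric]\<close>)
  have r2: "(\<Sum>S\<in>Pow (insert x A). real (card S) * W \<pi> (card (insert x A)) S) = real (card (insert x A)) * \<pi>"
  proof -
    let ?f = "\<lambda>S. real (card S) * W \<pi> (card A) S" and ?g = "\<lambda>S. W \<pi> (card A) S"
    have "(\<Sum>S\<in>Pow A. (1 - \<pi>) * ?f S) + (\<Sum>S\<in>Pow A. \<pi> * (?f S + ?g S))
        = (1 - \<pi>) * sum ?f (Pow A) + \<pi> * (sum ?f (Pow A) + sum ?g (Pow A))"
      by (simp add: sum_distrib_left[symmetric] sum.distrib[symmetric])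
    also have "\<dots> = (1 - \<pi>) * (real (card A) * \<pi>) + \<pi> * (real (card A) * \<pi> + 1)"
      using insert.IH by simp
    also have "\<dots> = real (Suc (card A)) * \<pi>" by (simp add: algebra_simps)
    finally show ?thesis unfolding cI s2 .
  qed
  show ?case using r1 r2 by blast
qed

lemma markov_sum:
  assumes "finite A" "0 \<le> \<pi>" "\<pi> \<le> 1" "k > 0"
  shows "(\<Sum>T\<in>{T. T \<subseteq> A \<and> card T < k}. W \<pi> (card A) T) \<ge> 1 - real (card A) * \<pi> / k"
proof -
  let ?P = "Pow A"
  let ?G = "{T. T \<subseteq> A \<and> card T < k}"
  let ?H = "{T. T \<subseteq> A \<and> \<not> card T < k}"
  have fin: "finite ?P" using assms by simp
  have split: "(\<Sum>T\<in>?P. W \<pi> (card A) T) = (\<Sum>T\<in>?G. W \<pi> (card A) T) + (\<Sum>T\<in>?H. W \<pi> (card A) T)"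
  proof -
    have "?P = ?G \<union> ?H" by auto
    moreover have "?G \<inter> ?H = {}" by auto
    moreover have "finite ?G" "finite ?H" using assms by auto
    ultimately show ?thesis by (simp add: sum.union_disjoint)
  qed
  have "(\<Sum>T\<in>?H. W \<pi> (card A) T) \<le> (\<Sum>T\<in>?H. real (card T) / k * W \<pi> (card A) T)"
  proof (intro sum_mono)
    fix T assume "T \<in> ?H"
    then have "real k \<le> real (card T)" by auto
    then have "real k * W \<pi> (card A) T \<le> real (card T) * W \<pi> (card A) T"
      using assms by (intro mult_right_mono W_nonneg) auto
    then show "W \<pi> (card A) T \<le> real (card T) / k * W \<pi> (card A) T"
      using assms by (simp add: field_simps)
  qed
  also have "\<dots> \<le> (\<Sum>T\<in>?P. real (card T) / k * W \<pi> (card A) T)"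
    using assms by (intro sum_mono2) (auto intro!: divide_nonneg_nonneg mult_nonneg_nonneg W_nonneg)
  also have "\<dots> = (\<Sum>T\<in>?P. real (card T) * W \<pi> (card A) T) / k"
    by (simp add: sum_divide_distrib)
  also have "\<dots> = real (card A) * \<pi> / k" using bin_sums[OF assms(1)] by simp
  finally show ?thesis using split bin_sums[OF assms(1), of \<pi>] by simp
qed


lemma avg:
  fixes I :: "nat set" and k :: nat and \<pi> :: real and lo :: "nat set \<Rightarrow> nat \<Rightarrow> ennreal"
    and R :: "nat set \<Rightarrow> ennreal" and B :: ennreal
  assumes fin: "finite I" and \<pi>: "0 \<le> \<pi>" "\<pi> \<le> 1" and k: "k \<ge> 1"
    and R: "\<And>S. S \<subseteq> I \<Longrightarrow> card S \<le> k \<Longrightarrow> (\<Sum>i\<in>I. lo S i) \<le> R S"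
    and B: "\<And>i T. i \<in> I \<Longrightarrow> T \<subseteq> I - {i} \<Longrightarrow> card T < k \<Longrightarrow>
              B \<le> ennreal (1-\<pi>) * lo T i + ennreal \<pi> * lo (insert i T) i"
  shows "(\<Sum>i\<in>I. ennreal (\<Sum>T\<in>{T. T \<subseteq> I - {i} \<and> card T < k}. W \<pi> (card (I - {i})) T) * B)
      \<le> (\<Sum>S\<in>{S. S \<subseteq> I \<and> card S \<le> k}. ennreal (W \<pi> (card I) S) * R S)"
proof -
  let ?F = "{S. S \<subseteq> I \<and> card S \<le> k}"
  let ?G = "\<lambda>i. {T. T \<subseteq> I - {i} \<and> card T < k}"
  let ?V = "\<lambda>i T. W \<pi> (card (I - {i})) T"
  have finF: "finite ?F" using fin by auto
  have step: "ennreal (\<Sum>T\<in>?G i. ?V i T) * B \<le> (\<Sum>S\<in>?F. ennreal (W \<pi> (card I) S) * lo S i)" if i: "i \<in> I" for i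
  proof -
    have finG: "finite (?G i)" using fin by auto
    have "card I > 0" using fin i card_gt_0_iff by blast
    then have cI: "card I = Suc (card (I - {i}))" using fin i by simp
    have wT: "W \<pi> (card I) T = (1 - \<pi>) * ?V i T" if "T \<in> ?G i" for T
    proof -
      have "card T \<le> card (I - {i})" using that fin by (intro card_mono) auto
      then have "card I - card T = Suc (card (I - {i}) - card T)" unfolding cI by simp
      then show ?thesis by (simp add: W_def)
    qed
    have wT2: "W \<pi> (card I) (insert i T) = \<pi> * ?V i T" if "T \<in> ?G i" for T
    proof -
      have fT: "finite T" "i \<notin> T" using that fin finite_subset[of T I] by auto
      have "card T \<le> card (I - {i})" using that fin by (intro card_mono) auto
      then have "card I - card (insert i T) = card (I - {i}) - card T" unfolding cI using fT by simp
      then show ?thesis using fT by (simp add: W_def)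
    qed
    have disj: "?G i \<inter> insert i ` ?G i = {}" by auto
    have inj: "inj_on (insert i) (?G i)" by (intro inj_onI) (metis Diff_iff insert_ident mem_Collect_eq singletonI subsetD)
    have sub: "?G i \<union> insert i ` ?G i \<subseteq> ?F"
    proof
      fix S assume "S \<in> ?G i \<union> insert i ` ?G i"
      then show "S \<in> ?F"
      proof
        assume "S \<in> ?G i" then show ?thesis using i by auto
      next
        assume "S \<in> insert i ` ?G i"
        then obtain T where T: "T \<in> ?G i" "S = insert i T" by auto
        have "finite T" using T fin finite_subset[of T I] by auto
        then have "card S \<le> Suc (card T)" using T by (simp add: card_insert_le_m1)
        then show ?thesis using T i by auto
      qed
    qed
    have "ennreal (\<Sum>T\<in>?G i. ?V i T) * B = (\<Sum>T\<in>?G i. ennreal (?V i T) * B)"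
      by (subst sum_ennreal[symmetric], simp add: \<pi> W_nonneg, simp add: sum_distrib_right)
    also have "\<dots> \<le> (\<Sum>T\<in>?G i. ennreal (?V i T) * (ennreal (1-\<pi>) * lo T i + ennreal \<pi> * lo (insert i T) i))"
      using B[OF i] by (intro sum_mono mult_left_mono) auto
    also have "\<dots> = (\<Sum>T\<in>?G i. ennreal (W \<pi> (card I) T) * lo T i) + (\<Sum>T\<in>?G i. ennreal (W \<pi> (card I) (insert i T)) * lo (insert i T) i)"
      unfolding sum.distrib[symmetric]
    proof (intro sum.cong refl)
      fix T assume T: "T \<in> ?G i"
      have n: "0 \<le> ?V i T" using \<pi> by (simp add: W_nonneg)
      show "ennreal (?V i T) * (ennreal (1-\<pi>) * lo T i + ennreal \<pi> * lo (insert i T) i)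
          = ennreal (W \<pi> (card I) T) * lo T i + ennreal (W \<pi> (card I) (insert i T)) * lo (insert i T) i"
        unfolding wT[OF T] wT2[OF T] using \<pi> n
        by (simp add: ennreal_mult distrib_left mult.assoc mult.left_commute)
    qed
    also have "(\<Sum>T\<in>?G i. ennreal (W \<pi> (card I) (insert i T)) * lo (insert i T) i)
        = (\<Sum>S\<in>insert i ` ?G i. ennreal (W \<pi> (card I) S) * lo S i)"
      using inj by (simp add: sum.reindex)
    also have "(\<Sum>T\<in>?G i. ennreal (W \<pi> (card I) T) * lo T i) + (\<Sum>S\<in>insert i ` ?G i. ennreal (W \<pi> (card I) S) * lo S i)
        = (\<Sum>S\<in>?G i \<union> insert i ` ?G i. ennreal (W \<pi> (card I) S) * lo S i)"
      using finG disj by (intro sum.union_disjoint[symmetric]) auto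
    also have "\<dots> \<le> (\<Sum>S\<in>?F. ennreal (W \<pi> (card I) S) * lo S i)"
      using finF sub by (intro sum_mono2) auto
    finally show ?thesis .
  qed
  have "(\<Sum>i\<in>I. ennreal (\<Sum>T\<in>?G i. ?V i T) * B) \<le> (\<Sum>i\<in>I. \<Sum>S\<in>?F. ennreal (W \<pi> (card I) S) * lo S i)"
    using step by (intro sum_mono) auto
  also have "\<dots> = (\<Sum>S\<in>?F. ennreal (W \<pi> (card I) S) * (\<Sum>i\<in>I. lo S i))"
    by (subst sum.swap) (simp add: sum_distrib_left)
  also have "\<dots> \<le> (\<Sum>S\<in>?F. ennreal (W \<pi> (card I) S) * R S)"
    using R by (intro sum_mono mult_left_mono) auto
  finally show ?thesis .
qed

lemma sum_le_SUP:
  fixes R :: "'b \<Rightarrow> ennreal" and w :: "'b \<Rightarrow> real"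
  assumes "finite F" "\<And>S. S \<in> F \<Longrightarrow> 0 \<le> w S" "(\<Sum>S\<in>F. w S) \<le> 1" "\<And>S. S \<in> F \<Longrightarrow> R S \<le> M"
  shows "(\<Sum>S\<in>F. ennreal (w S) * R S) \<le> M"
proof -
  have "(\<Sum>S\<in>F. ennreal (w S) * R S) \<le> (\<Sum>S\<in>F. ennreal (w S) * M)"
    using assms by (intro sum_mono mult_left_mono) auto
  also have "\<dots> = ennreal (\<Sum>S\<in>F. w S) * M"
    by (subst sum_ennreal[symmetric], simp add: assms, simp add: sum_distrib_right)
  also have "\<dots> \<le> 1 * M"
    using assms by (intro mult_right_mono) auto
  finally show ?thesis by simp
qed




lemma risk_ge:
  assumes est: "est \<in> estimators p" and I: "I \<subseteq> {..<p}"
  shows "(\<Sum>i\<in>I. ell p q \<sigma> est \<beta> i) \<le> risk p q \<sigma> est \<beta>"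
proof -
  have "risk p q \<sigma> est \<beta> = (\<integral>\<^sup>+\<xi>. (\<Sum>i<p. ennreal (\<bar>est (restrict (\<lambda>j. \<beta> j + \<sigma> * \<xi> j) {..<p}) i - \<beta> i\<bar> powr q)) \<partial>gauss_vec p)"
    unfolding risk_def by (intro nn_integral_cong) (simp add: sum_ennreal)
  also have "\<dots> = (\<Sum>i<p. ell p q \<sigma> est \<beta> i)"
    unfolding ell_def using meas_F[OF est] by (intro nn_integral_sum) auto
  also have "\<dots> \<ge> (\<Sum>i\<in>I. ell p q \<sigma> est \<beta> i)"
    using I by (intro sum_mono2) auto
  finally show ?thesis .
qed

lemma half_min:
  fixes A B C D :: real
  assumes "1/2 * A \<le> C" "1/2 * B \<le> D"
  shows "1/2 * min A B \<le> min C D"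
  using assms by (auto simp: min_def)

lemma BE_half_mono:
  fixes p s :: nat
  assumes "1 \<le> s" "s < p"
  shows "ennreal (1/2) * (\<integral>\<^sup>+x. ennreal (min ((1 - s/p) * std_normal_density x) ((s/p) * std_normal_density (x - c))) \<partial>lborel)
     \<le> (\<integral>\<^sup>+x. ennreal (min ((1 - s/(2*p)) * std_normal_density x) ((s/(2*p)) * std_normal_density (x - c))) \<partial>lborel)"
proof -
  have pp: "real s < real p" "0 < real p" using assms by auto
  have "ennreal (1/2) * (\<integral>\<^sup>+x. ennreal (min ((1 - s/p) * std_normal_density x) ((s/p) * std_normal_density (x - c))) \<partial>lborel)
      = (\<integral>\<^sup>+x. ennreal (1/2) * ennreal (min ((1 - s/p) * std_normal_density x) ((s/p) * std_normal_density (x - c))) \<partial>lborel)"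
    by (rule nn_integral_cmult[symmetric]) auto
  also have "\<dots> \<le> (\<integral>\<^sup>+x. ennreal (min ((1 - s/(2*p)) * std_normal_density x) ((s/(2*p)) * std_normal_density (x - c))) \<partial>lborel)"
  proof (intro nn_integral_mono)
    fix x
    have f: "0 \<le> std_normal_density x" "0 \<le> std_normal_density (x - c)" by auto
    have "1/2 * ((1 - s/p) * std_normal_density x) \<le> (1 - s/(2*p)) * std_normal_density x"
    proof -
      have "1/2 * (1 - s/p) \<le> 1 - s/(2*p)" using pp by (simp add: field_simps)
      then have "1/2 * (1 - s/p) * std_normal_density x \<le> (1 - s/(2*p)) * std_normal_density x"
        using f by (intro mult_right_mono) auto
      then show ?thesis by (simp add: mult.assoc)
    qed
    moreover have "1/2 * ((s/p) * std_normal_density (x - c)) \<le> (s/(2*p)) * std_normal_density (x - c)"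
      by simp
    ultimately have hm: "1/2 * min ((1 - s/p) * std_normal_density x) ((s/p) * std_normal_density (x - c))
        \<le> min ((1 - s/(2*p)) * std_normal_density x) ((s/(2*p)) * std_normal_density (x - c))"
      by (rule half_min)
    then show "ennreal (1/2) * ennreal (min ((1 - s/p) * std_normal_density x) ((s/p) * std_normal_density (x - c)))
        \<le> ennreal (min ((1 - s/(2*p)) * std_normal_density x) ((s/(2*p)) * std_normal_density (x - c)))"
    proof -
      have "0 \<le> 1 - s/p" using pp by simp
      then have "0 \<le> min ((1 - s/p) * std_normal_density x) ((s/p) * std_normal_density (x - c))"
        using f by simp
      then show ?thesis using hm by (subst ennreal_mult[symmetric]) (auto intro: ennreal_leI)
    qed
  qed
  finally show ?thesis .
qed

lemma psi_nonneg: "0 \<le> psi p s a \<sigma>"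
  unfolding psi_def gauss_tail_def by simp

lemma sumW_le1:
  assumes "finite I" "0 \<le> \<pi>" "\<pi> \<le> 1"
  shows "(\<Sum>S\<in>{S. S \<subseteq> I \<and> card S \<le> k}. W \<pi> (card I) S) \<le> 1"
proof -
  have "(\<Sum>S\<in>{S. S \<subseteq> I \<and> card S \<le> k}. W \<pi> (card I) S) \<le> (\<Sum>S\<in>Pow I. W \<pi> (card I) S)"
    using assms by (intro sum_mono2) (auto simp: W_nonneg)
  also have "\<dots> = 1" using bin_sums[OF assms(1)] by simp
  finally show ?thesis .
qed

lemma caseA:
  fixes p s :: nat
  assumes est: "est \<in> estimators p" and \<sigma>: "\<sigma> > 0" and a: "a > 0" and s: "1 \<le> s" "s < p" and q: "q > 0"
  shows "ennreal ((a/2) powr q * psi p s a \<sigma> / 4) \<le> (SUP \<beta>\<in>Omega p s a. risk p q \<sigma> est \<beta>)"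
proof -
  define \<pi> where "\<pi> = real s / real (2*p)"
  define I where "I = {..<p}"
  define bS where "bS = (\<lambda>S::nat set. \<lambda>j::nat. if j \<in> S then a else 0)"
  define BEp where "BEp = (\<integral>\<^sup>+x. ennreal (min ((1 - s/(2*p)) * std_normal_density x) ((s/(2*p)) * std_normal_density (x - a/\<sigma>))) \<partial>lborel)"
  define BE0 where "BE0 = (\<integral>\<^sup>+x. ennreal (min ((1 - s/p) * std_normal_density x) ((s/p) * std_normal_density (x - a/\<sigma>))) \<partial>lborel)"
  define B where "B = ennreal ((a/2) powr q) * BEp"
  define SUPR where "SUPR = (SUP \<beta>\<in>Omega p s a. risk p q \<sigma> est \<beta>)"
  have pp: "0 < real p" "real s < real p" "1 \<le> real s" using s by auto
  have \<pi>: "0 \<le> \<pi>" "\<pi> \<le> 1" using pp by (auto simp: \<pi>_def field_simps)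
  have fI: "finite I" by (simp add: I_def)
  have omega: "bS S \<in> Omega p s a" if "S \<subseteq> I" "card S \<le> s" for S
  proof -
    have "{i. bS S i \<noteq> 0} = S" using a by (auto simp: bS_def)
    then show ?thesis using that a by (auto simp: Omega_def bS_def I_def)
  qed
  have av: "(\<Sum>i\<in>I. ennreal (\<Sum>T\<in>{T. T \<subseteq> I - {i} \<and> card T < s}. W \<pi> (card (I - {i})) T) * B)
      \<le> (\<Sum>S\<in>{S. S \<subseteq> I \<and> card S \<le> s}. ennreal (W \<pi> (card I) S) * risk p q \<sigma> est (bS S))"
  proof (rule avg[OF fI \<pi> s(1)])
    fix S assume "S \<subseteq> I" "card S \<le> s"
    show "(\<Sum>i\<in>I. ell p q \<sigma> est (bS S) i) \<le> risk p q \<sigma> est (bS S)"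
      by (rule risk_ge[OF est]) (simp add: I_def)
  next
    fix i T assume i: "i \<in> I" and T: "T \<subseteq> I - {i}" "card T < s"
    have e1: "(bS T)(i := a) = bS (insert i T)" by (auto simp: bS_def)
    have e0: "bS T i = 0" using T by (auto simp: bS_def)
    have w0n: "0 \<le> 1 - \<pi>" using \<pi> by simp
    have iP: "i < p" using i by (simp add: I_def)
    have "ennreal (((a - 0)/2) powr q) * (\<integral>\<^sup>+x. ennreal (min ((1 - \<pi>) * std_normal_density x) (\<pi> * std_normal_density (x - (a - 0)/\<sigma>))) \<partial>lborel)
     \<le> ennreal (1 - \<pi>) * ell p q \<sigma> est (bS T) i + ennreal \<pi> * ell p q \<sigma> est ((bS T)(i := a)) i"
      by (rule coord[where \<beta>="bS T", OF est iP \<sigma> a w0n \<pi>(1) q e0])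
    then
    show "B \<le> ennreal (1 - \<pi>) * ell p q \<sigma> est (bS T) i + ennreal \<pi> * ell p q \<sigma> est (bS (insert i T)) i"
      unfolding e1 B_def BEp_def \<pi>_def by simp
  qed
  have half: "ennreal (1/2) \<le> ennreal (\<Sum>T\<in>{T. T \<subseteq> I - {i} \<and> card T < s}. W \<pi> (card (I - {i})) T)" if i: "i \<in> I" for i
  proof -
    have c: "card (I - {i}) = p - 1" using i by (simp add: I_def)
    have "1 - real (card (I - {i})) * \<pi> / s \<le> (\<Sum>T\<in>{T. T \<subseteq> I - {i} \<and> card T < s}. W \<pi> (card (I - {i})) T)"
      using markov_sum[of "I - {i}" \<pi> s] fI \<pi> s by auto
    moreover have "1/2 \<le> 1 - real (card (I - {i})) * \<pi> / s"
      unfolding c \<pi>_def using pp s by (simp add: field_simps of_nat_diff)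
    ultimately show ?thesis by (intro ennreal_leI) linarith
  qed
  have "(\<Sum>i\<in>I. ennreal (1/2) * B) \<le> (\<Sum>i\<in>I. ennreal (\<Sum>T\<in>{T. T \<subseteq> I - {i} \<and> card T < s}. W \<pi> (card (I - {i})) T) * B)"
    using half by (intro sum_mono mult_right_mono) auto
  also note av
  also have "(\<Sum>S\<in>{S. S \<subseteq> I \<and> card S \<le> s}. ennreal (W \<pi> (card I) S) * risk p q \<sigma> est (bS S)) \<le> SUPR"
  proof (rule sum_le_SUP)
    show "finite {S. S \<subseteq> I \<and> card S \<le> s}" using fI by auto
    show "(\<Sum>S\<in>{S. S \<subseteq> I \<and> card S \<le> s}. W \<pi> (card I) S) \<le> 1" by (rule sumW_le1[OF fI \<pi>])
  next
    fix S assume "S \<in> {S. S \<subseteq> I \<and> card S \<le> s}"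
    then show "0 \<le> W \<pi> (card I) S" "risk p q \<sigma> est (bS S) \<le> SUPR"
      using \<pi> omega unfolding SUPR_def by (auto simp: W_nonneg intro: SUP_upper)
  qed
  finally have main0: "(\<Sum>i\<in>I. ennreal (1/2) * B) \<le> SUPR" .
  have "(\<Sum>i\<in>I. ennreal (1/2) * B) = of_nat p * (ennreal (1/2) * B)" by (simp add: I_def)
  also have "\<dots> = ennreal (real p / 2) * B"
  proof -
    have "ennreal (real p / 2) = ennreal (real p * (1/2))" by simp
    also have "\<dots> = ennreal (real p) * ennreal (1/2)" by (rule ennreal_mult) auto
    finally have "ennreal (real p / 2) = ennreal (real p) * ennreal (1/2)" .
    then show ?thesis by (simp add: ennreal_of_nat_eq_real_of_nat mult.assoc)
  qed
  finally have main: "ennreal (real p / 2) * B \<le> SUPR" using main0 by simp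
  have ps: "0 \<le> psi p s a \<sigma>" by (rule psi_nonneg)
  have "ennreal ((a/2) powr q * psi p s a \<sigma> / 4) = ennreal ((a/2) powr q) * (ennreal (1/4) * ennreal (psi p s a \<sigma>))"
    using ps by (simp only: ennreal_mult[symmetric] powr_ge_zero divide_nonneg_nonneg zero_le_numeral) (simp add: field_simps)
  also have "\<dots> \<le> ennreal ((a/2) powr q) * (ennreal (1/4) * (ennreal (real p) * BE0))"
    unfolding BE0_def by (intro mult_left_mono BE_main \<sigma> a s) auto
  also have "\<dots> = ennreal ((a/2) powr q) * (ennreal (real p / 2) * (ennreal (1/2) * BE0))"
  proof -
    have "ennreal (1/4) * ennreal (real p) = ennreal (real p / 2) * ennreal (1/2)"
    proof -
      have "ennreal (1/4) * ennreal (real p) = ennreal (1/4 * real p)" by (rule ennreal_mult[symmetric]) auto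
      also have "1/4 * real p = real p / 2 * (1/2)" by simp
      also have "ennreal (real p / 2 * (1/2)) = ennreal (real p / 2) * ennreal (1/2)" by (rule ennreal_mult) auto
      finally show ?thesis .
    qed
    then show ?thesis by (metis mult.assoc)
  qed
  also have "\<dots> \<le> ennreal ((a/2) powr q) * (ennreal (real p / 2) * BEp)"
    unfolding BE0_def BEp_def by (intro mult_left_mono BE_half_mono s) auto
  also have "\<dots> = ennreal (real p / 2) * B" by (simp add: B_def ac_simps)
  finally show ?thesis using main unfolding SUPR_def by simp
qed



lemma dens_ge: "\<bar>x\<bar> \<le> 1 \<Longrightarrow> std_normal_density 1 \<le> std_normal_density x"
proof -
  assume "\<bar>x\<bar> \<le> 1"
  then have "\<bar>x\<bar>\<^sup>2 \<le> 1" by (intro power_le_one) auto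
  then have "x\<^sup>2 \<le> 1" by simp
  then have "exp (- (1/2)) \<le> exp (- (x\<^sup>2/2))" by simp
  then have "exp (- (1/2)) / sqrt (2*pi) \<le> exp (- (x\<^sup>2/2)) / sqrt (2*pi)" by (intro divide_right_mono) auto
  then show ?thesis by (simp add: std_normal_density_def)
qed

lemma BEh_lb: "ennreal (std_normal_density 1 / 2) \<le> (\<integral>\<^sup>+x. ennreal (min (1/2 * std_normal_density x) (1/2 * std_normal_density (x - 1))) \<partial>lborel)"
proof -
  have "ennreal (std_normal_density 1 / 2) = (\<integral>\<^sup>+x. ennreal (std_normal_density 1 / 2) * indicator {0..1::real} x \<partial>lborel)"
    by (subst nn_integral_cmult_indicator) (auto simp: emeasure_lborel_Icc)
  also have "\<dots> \<le> (\<integral>\<^sup>+x. ennreal (min (1/2 * std_normal_density x) (1/2 * std_normal_density (x - 1))) \<partial>lborel)"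
  proof (intro nn_integral_mono)
    fix x
    show "ennreal (std_normal_density 1 / 2) * indicator {0..1::real} x \<le> ennreal (min (1/2 * std_normal_density x) (1/2 * std_normal_density (x - 1)))"
    proof (cases "x \<in> {0..1}")
      case True
      then have "std_normal_density 1 \<le> std_normal_density x" "std_normal_density 1 \<le> std_normal_density (x - 1)"
        by (auto intro!: dens_ge)
      then show ?thesis using True by (auto intro!: ennreal_leI)
    qed auto
  qed
  finally show ?thesis .
qed

lemma tail0_lb: "\<sigma> > 0 \<Longrightarrow> ennreal (std_normal_density 1) \<le> ennreal (gauss_tail \<sigma> 0)"
proof -
  assume \<sigma>: "\<sigma> > 0"
  have "ennreal (std_normal_density 1) = (\<integral>\<^sup>+x. ennreal (std_normal_density 1) * indicator {0<..1::real} x \<partial>lborel)"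
    by (subst nn_integral_cmult_indicator) (auto simp: emeasure_lborel_Ioc)
  also have "\<dots> \<le> (\<integral>\<^sup>+x. ennreal (std_normal_density x) * indicator {0/\<sigma><..} x \<partial>lborel)"
  proof (intro nn_integral_mono)
    fix x
    show "ennreal (std_normal_density 1) * indicator {0<..1::real} x \<le> ennreal (std_normal_density x) * indicator {0/\<sigma><..} x"
      by (cases "x \<in> {0<..1}") (auto intro!: ennreal_leI dens_ge simp: indicator_def)
  qed
  also have "\<dots> = ennreal (gauss_tail \<sigma> 0)" by (rule gauss_tail_emeasure[OF \<sigma>, symmetric])
  finally show ?thesis .
qed

lemma caseB:
  fixes p s :: nat
  assumes est: "est \<in> estimators p" and \<sigma>: "\<sigma> > 0" and a: "a > 0" and s: "1 \<le> s" "s < p" and q: "q > 0"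
  shows "ennreal (real s * (\<sigma>/2) powr q * (std_normal_density 1 / 2)) \<le> (SUP \<beta>\<in>Omega p s a. risk p q \<sigma> est \<beta>)"
proof -
  define \<pi> :: real where "\<pi> = 1/2"
  define I where "I = {..<s}"
  define bS where "bS = (\<lambda>S::nat set. \<lambda>j::nat. (if j < s then a else 0) + (if j \<in> S then \<sigma> else 0))"
  define BEh where "BEh = (\<integral>\<^sup>+x. ennreal (min (1/2 * std_normal_density x) (1/2 * std_normal_density (x - 1))) \<partial>lborel)"
  define B where "B = ennreal ((\<sigma>/2) powr q) * BEh"
  define SUPR where "SUPR = (SUP \<beta>\<in>Omega p s a. risk p q \<sigma> est \<beta>)"
  have \<pi>: "0 \<le> \<pi>" "\<pi> \<le> 1" by (auto simp: \<pi>_def)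
  have fI: "finite I" by (simp add: I_def)
  have omega: "bS S \<in> Omega p s a" if "S \<subseteq> I" for S
  proof -
    have "{i. bS S i \<noteq> 0} = I" using a \<sigma> that by (auto simp: bS_def I_def)
    moreover have "\<forall>i. bS S i \<noteq> 0 \<longrightarrow> a \<le> \<bar>bS S i\<bar>" using a \<sigma> that by (auto simp: bS_def I_def)
    moreover have "\<forall>i. p \<le> i \<longrightarrow> bS S i = 0" using that s by (auto simp: bS_def I_def)
    ultimately show ?thesis by (auto simp: Omega_def I_def)
  qed
  have av: "(\<Sum>i\<in>I. ennreal (\<Sum>T\<in>{T. T \<subseteq> I - {i} \<and> card T < s}. W \<pi> (card (I - {i})) T) * B)
      \<le> (\<Sum>S\<in>{S. S \<subseteq> I \<and> card S \<le> s}. ennreal (W \<pi> (card I) S) * risk p q \<sigma> est (bS S))"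
  proof (rule avg[OF fI \<pi> s(1)])
    fix S assume "S \<subseteq> I" "card S \<le> s"
    show "(\<Sum>i\<in>I. ell p q \<sigma> est (bS S) i) \<le> risk p q \<sigma> est (bS S)"
      by (rule risk_ge[OF est]) (use s in \<open>auto simp: I_def\<close>)
  next
    fix i T assume i: "i \<in> I" and T: "T \<subseteq> I - {i}" "card T < s"
    have e1: "(bS T)(i := a + \<sigma>) = bS (insert i T)" using i by (auto simp: bS_def I_def)
    have e0: "bS T i = a" using T i by (auto simp: bS_def I_def)
    have w0n: "0 \<le> 1 - \<pi>" using \<pi> by simp
    have iP: "i < p" using i s by (simp add: I_def)
    have m: "a < a + \<sigma>" using \<sigma> by simp
    have "ennreal (((a + \<sigma> - a)/2) powr q) * (\<integral>\<^sup>+x. ennreal (min ((1 - \<pi>) * std_normal_density x) (\<pi> * std_normal_density (x - (a + \<sigma> - a)/\<sigma>))) \<partial>lborel)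
     \<le> ennreal (1 - \<pi>) * ell p q \<sigma> est (bS T) i + ennreal \<pi> * ell p q \<sigma> est ((bS T)(i := a + \<sigma>)) i"
      by (rule coord[where \<beta>="bS T", OF est iP \<sigma> m w0n \<pi>(1) q e0])
    then show "B \<le> ennreal (1 - \<pi>) * ell p q \<sigma> est (bS T) i + ennreal \<pi> * ell p q \<sigma> est (bS (insert i T)) i"
      unfolding e1 B_def BEh_def \<pi>_def using \<sigma> by simp
  qed
  have one: "(\<Sum>T\<in>{T. T \<subseteq> I - {i} \<and> card T < s}. W \<pi> (card (I - {i})) T) = 1" if i: "i \<in> I" for i
  proof -
    have c: "card (I - {i}) = s - 1" using i by (simp add: I_def)
    have "{T. T \<subseteq> I - {i} \<and> card T < s} = Pow (I - {i})"
    proof (intro set_eqI iffI)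
      fix T assume "T \<in> Pow (I - {i})"
      then have "card T \<le> card (I - {i})" using fI by (intro card_mono) auto
      then show "T \<in> {T. T \<subseteq> I - {i} \<and> card T < s}" using c s \<open>T \<in> Pow (I - {i})\<close> by auto
    qed auto
    then show ?thesis using bin_sums[of "I - {i}" \<pi>] fI by simp
  qed
  have "(\<Sum>i\<in>I. B) = (\<Sum>i\<in>I. ennreal (\<Sum>T\<in>{T. T \<subseteq> I - {i} \<and> card T < s}. W \<pi> (card (I - {i})) T) * B)"
    using one by simp
  also note av
  also have "(\<Sum>S\<in>{S. S \<subseteq> I \<and> card S \<le> s}. ennreal (W \<pi> (card I) S) * risk p q \<sigma> est (bS S)) \<le> SUPR"
  proof (rule sum_le_SUP)
    show "finite {S. S \<subseteq> I \<and> card S \<le> s}" using fI by auto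
    show "(\<Sum>S\<in>{S. S \<subseteq> I \<and> card S \<le> s}. W \<pi> (card I) S) \<le> 1" by (rule sumW_le1[OF fI \<pi>])
  next
    fix S assume "S \<in> {S. S \<subseteq> I \<and> card S \<le> s}"
    then show "0 \<le> W \<pi> (card I) S" "risk p q \<sigma> est (bS S) \<le> SUPR"
      using \<pi> omega unfolding SUPR_def by (auto simp: W_nonneg intro: SUP_upper)
  qed
  finally have main: "of_nat s * B \<le> SUPR" by (simp add: I_def)
  have "ennreal (real s * (\<sigma>/2) powr q * (std_normal_density 1 / 2))
      = ennreal (real s) * (ennreal ((\<sigma>/2) powr q) * ennreal (std_normal_density 1 / 2))"
  proof -
    have e: "real s * (\<sigma>/2) powr q * (std_normal_density 1 / 2) = real s * ((\<sigma>/2) powr q * (std_normal_density 1 / 2))"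
      by (simp add: mult.assoc)
    have "ennreal (real s * ((\<sigma>/2) powr q * (std_normal_density 1 / 2))) = ennreal (real s) * ennreal ((\<sigma>/2) powr q * (std_normal_density 1 / 2))"
      by (rule ennreal_mult) auto
    also have "ennreal ((\<sigma>/2) powr q * (std_normal_density 1 / 2)) = ennreal ((\<sigma>/2) powr q) * ennreal (std_normal_density 1 / 2)"
      by (rule ennreal_mult) auto
    finally show ?thesis unfolding e .
  qed
  also have "\<dots> \<le> ennreal (real s) * (ennreal ((\<sigma>/2) powr q) * BEh)"
    unfolding BEh_def by (intro mult_left_mono BEh_lb) auto
  also have "\<dots> = of_nat s * B" by (simp add: B_def ennreal_of_nat_eq_real_of_nat)
  finally show ?thesis using main unfolding SUPR_def by simp
qed



lemma abs_powr_bound: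
  fixes y q :: real
  assumes q: "1 \<le> q"
  shows "\<bar>y\<bar> powr q \<le> 1 + y ^ (2 * nat \<lceil>q\<rceil>)"
proof (cases "\<bar>y\<bar> \<le> 1")
  case True
  have "\<bar>y\<bar> powr q \<le> 1 powr q" using True q by (intro powr_mono2) auto
  then have "\<bar>y\<bar> powr q \<le> 1" by simp
  moreover have "0 \<le> y ^ (2 * nat \<lceil>q\<rceil>)" by (simp add: power_mult)
  ultimately show ?thesis by linarith
next
  case False
  have "q \<le> real (2 * nat \<lceil>q\<rceil>)" using q by linarith
  then have "\<bar>y\<bar> powr q \<le> \<bar>y\<bar> powr real (2 * nat \<lceil>q\<rceil>)" using False by (intro powr_mono) auto
  also have "\<dots> = \<bar>y\<bar> ^ (2 * nat \<lceil>q\<rceil>)" using False by (subst powr_realpow) auto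
  also have "\<dots> = y ^ (2 * nat \<lceil>q\<rceil>)" by (simp add: power_mult)
  finally show ?thesis by simp
qed

lemma sigma_q_bound:
  assumes q: "1 \<le> q" and \<sigma>: "\<sigma> > 0"
  shows "sigma_q q \<sigma> powr q \<le> (1 + fact (2 * nat \<lceil>q\<rceil>) / (2 ^ nat \<lceil>q\<rceil> * fact (nat \<lceil>q\<rceil>))) * \<sigma> powr q"
proof -
  define n where "n = nat \<lceil>q\<rceil>"
  define J where "J = (\<integral>x. \<bar>x\<bar> powr q * normal_density 0 \<sigma> x \<partial>lborel)"
  have J0: "0 \<le> J" unfolding J_def by (intro integral_nonneg_AE) auto
  have sq: "sigma_q q \<sigma> powr q = J"
    unfolding sigma_q_def J_def[symmetric] using q J0 by (simp add: powr_powr)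
  define g where "g = (\<lambda>x. \<sigma> powr q * normal_density 0 \<sigma> x + (\<sigma> powr q / \<sigma> ^ (2*n)) * (normal_density 0 \<sigma> x * (x - 0) ^ (2*n)))"
  have i1: "integrable lborel (\<lambda>x. normal_density 0 \<sigma> x * (x - 0)^(2*n))" by (rule integrable_normal_moment[OF \<sigma>])
  have i0: "integrable lborel (\<lambda>x. normal_density 0 \<sigma> x)" using integrable_normal_density[OF \<sigma>] by simp
  have a0: "integrable lborel (\<lambda>x. \<sigma> powr q * normal_density 0 \<sigma> x)"
    apply (rule integrable_mult_right) using i0 apply assumption done
  have a1: "integrable lborel (\<lambda>x. (\<sigma> powr q / \<sigma> ^ (2*n)) * (normal_density 0 \<sigma> x * (x - 0) ^ (2*n)))"
    apply (rule integrable_mult_right) using i1 apply assumption done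
  have gi: "integrable lborel g" unfolding g_def by (rule Bochner_Integration.integrable_add[OF a0 a1])
  have pt: "\<bar>x\<bar> powr q * normal_density 0 \<sigma> x \<le> g x" for x
  proof -
    have e: "\<bar>x\<bar> = \<sigma> * \<bar>x / \<sigma>\<bar>" using \<sigma> by (simp add: abs_divide)
    have "\<bar>x\<bar> powr q = \<sigma> powr q * \<bar>x / \<sigma>\<bar> powr q"
      by (subst e, rule powr_mult)
    also have "\<dots> \<le> \<sigma> powr q * (1 + (x/\<sigma>) ^ (2*n))"
      unfolding n_def using abs_powr_bound[OF q, of "x/\<sigma>"] by (intro mult_left_mono) auto
    also have "\<dots> = \<sigma> powr q + (\<sigma> powr q / \<sigma> ^ (2*n)) * x ^ (2*n)"
      by (simp add: power_divide algebra_simps)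
    finally have "\<bar>x\<bar> powr q \<le> \<sigma> powr q + (\<sigma> powr q / \<sigma> ^ (2*n)) * x ^ (2*n)" .
    then have "\<bar>x\<bar> powr q * normal_density 0 \<sigma> x \<le> (\<sigma> powr q + (\<sigma> powr q / \<sigma> ^ (2*n)) * x ^ (2*n)) * normal_density 0 \<sigma> x"
      by (intro mult_right_mono) auto
    then show ?thesis by (simp add: g_def algebra_simps)
  qed
  have "J \<le> integral\<^sup>L lborel g"
    unfolding J_def
  proof (rule integral_mono'[OF gi])
    fix x show "\<bar>x\<bar> powr q * normal_density 0 \<sigma> x \<le> g x" by (rule pt)
    show "0 \<le> g x" using order.trans[OF _ pt[of x]] by simp
  qed
  also have "integral\<^sup>L lborel g = \<sigma> powr q + (\<sigma> powr q / \<sigma> ^ (2*n)) * (fact (2 * n) / ((2 / \<sigma>\<^sup>2)^n * fact n))"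
    unfolding g_def
    by (subst Bochner_Integration.integral_add[OF a0 a1], simp only: integral_mult_right_zero integral_normal_moment_even[OF \<sigma>])
       (simp add: \<sigma>)
  also have "\<dots> = (1 + fact (2 * n) / (2 ^ n * fact n)) * \<sigma> powr q"
  proof -
    have "(2 / \<sigma>\<^sup>2)^n = 2^n / \<sigma>^(2*n)" by (simp add: power_divide power_mult)
    then show ?thesis using \<sigma> by (simp add: field_simps)
  qed
  finally show ?thesis unfolding sq n_def .
qed



lemma phi1_bounds: "0 < std_normal_density 1" "std_normal_density 1 \<le> 1"
proof -
  show "0 < std_normal_density 1" by (simp add: normal_density_pos)
  have "exp (- (1/2::real)) \<le> 1" by simp
  moreover have "1 \<le> sqrt (2 * pi)" using pi_gt3 by (simp add: real_le_rsqrt)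
  ultimately have h: "exp (- (1/2::real)) \<le> sqrt (2 * pi)" by linarith
  show "std_normal_density 1 \<le> 1"
    using h by (simp add: std_normal_density_def divide_le_eq_1)
qed

lemma Omega_mono: "a \<le> b \<Longrightarrow> Omega p s b \<subseteq> Omega p s a"
  by (auto simp: Omega_def)

lemma half_powr: "0 \<le> (x::real) \<Longrightarrow> (x/2) powr q = 2 powr (-q) * x powr q"
  by (simp add: powr_divide powr_minus_divide)

lemma final_bound:
  fixes p s :: nat
  assumes q: "1 \<le> q" and est: "est \<in> estimators p" and \<sigma>: "\<sigma> > 0" and a: "a > 0" and s: "1 \<le> s" "s < p" and s2: "2 * real s < real p"
  defines "K \<equiv> 1 + fact (2 * nat \<lceil>q\<rceil>) / (2 ^ nat \<lceil>q\<rceil> * fact (nat \<lceil>q\<rceil>))"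
  shows "ennreal (2 powr (-q) * std_normal_density 1 / (4 * K) * Phi p s q \<sigma> a) \<le> (SUP \<beta>\<in>Omega p s a. risk p q \<sigma> est \<beta>)"
proof -
  define e where "e = 2 powr (-q)"
  define f where "f = std_normal_density 1"
  define SUPR where "SUPR = (SUP \<beta>\<in>Omega p s a. risk p q \<sigma> est \<beta>)"
  define C where "C = e * f / (4 * K)"
  have q0: "q > 0" using q by simp
  have e0: "e > 0" by (simp add: e_def)
  have f: "0 < f" "f \<le> 1" using phi1_bounds by (auto simp: f_def)
  have K: "1 \<le> K" unfolding K_def by simp
  have C0: "0 \<le> C" using e0 f K by (simp add: C_def)
  have CK: "C * K = e * f / 4" using K by (simp add: C_def)
  have Cle: "C \<le> e / 4"
  proof -
    have "C \<le> e * f / 4" unfolding C_def using e0 f K by (intro divide_left_mono) auto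
    also have "\<dots> \<le> e / 4" using e0 f by (simp add: mult_left_le)
    finally show ?thesis .
  qed
  have pp: "real s < real p" "0 < real s" using s by auto
  define L where "L = ln (real p / real s - 1)"
  have Lpos: "L > 0" unfolding L_def using s2 pp by (simp add: field_simps)
  have psi0: "0 \<le> psi p s x \<sigma>" for x by (rule psi_nonneg)
  show ?thesis
  proof (cases "a \<ge> t_star p s \<sigma>")
    case True
    then have Phi: "Phi p s q \<sigma> a = max (a powr q * psi p s a \<sigma>) (sigma_q q \<sigma> powr q * real s)"
      by (simp add: Phi_def)
    have A: "ennreal (C * (a powr q * psi p s a \<sigma>)) \<le> SUPR"
    proof -
      have "C * (a powr q * psi p s a \<sigma>) \<le> e / 4 * (a powr q * psi p s a \<sigma>)"
        using Cle psi0 by (intro mult_right_mono) auto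
      also have "\<dots> = (a/2) powr q * psi p s a \<sigma> / 4" using a by (simp add: half_powr e_def)
      finally have "ennreal (C * (a powr q * psi p s a \<sigma>)) \<le> ennreal ((a/2) powr q * psi p s a \<sigma> / 4)"
        by (rule ennreal_leI)
      also have "\<dots> \<le> SUPR" unfolding SUPR_def by (rule caseA[OF est \<sigma> a s q0])
      finally show ?thesis .
    qed
    have B: "ennreal (C * (sigma_q q \<sigma> powr q * real s)) \<le> SUPR"
    proof -
      have "C * (sigma_q q \<sigma> powr q * real s) \<le> C * (K * \<sigma> powr q * real s)"
        using sigma_q_bound[OF q \<sigma>] C0 by (intro mult_left_mono mult_right_mono) (auto simp: K_def)
      also have "\<dots> = e * f / 4 * \<sigma> powr q * real s" using CK by (simp add: algebra_simps)
      also have "\<dots> \<le> real s * (\<sigma>/2) powr q * (f / 2)"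
        using \<sigma> e0 f by (simp add: half_powr e_def algebra_simps)
      finally have "ennreal (C * (sigma_q q \<sigma> powr q * real s)) \<le> ennreal (real s * (\<sigma>/2) powr q * (std_normal_density 1 / 2))"
        unfolding f_def by (rule ennreal_leI)
      also have "\<dots> \<le> SUPR" unfolding SUPR_def by (rule caseB[OF est \<sigma> a s q0])
      finally show ?thesis .
    qed
    have "C * Phi p s q \<sigma> a = max (C * (a powr q * psi p s a \<sigma>)) (C * (sigma_q q \<sigma> powr q * real s))"
      unfolding Phi using C0 by (simp add: max_mult_distrib_left)
    then show ?thesis using A B unfolding SUPR_def C_def e_def f_def by (simp add: max_def)
  next
    case False
    define ts where "ts = t_star p s \<sigma>"
    define r where "r = sqrt (2 * L)"
    have r: "r > 0" "r\<^sup>2 = 2 * L" using Lpos by (auto simp: r_def)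
    have ts: "ts = \<sigma> * r" by (simp add: ts_def t_star_def r_def L_def)
    have ts0: "ts > 0" using ts r \<sigma> by simp
    have Phi: "Phi p s q \<sigma> a = real s * \<sigma> powr q * (2 * L) powr (q / 2)"
      using False by (simp add: Phi_def L_def)
    have rq: "(2 * L) powr (q / 2) = r powr q"
      unfolding r_def using Lpos by (simp add: powr_half_sqrt[symmetric] powr_powr)
    have tf: "t_fun p s ts \<sigma> = ts"
    proof -
      have "\<sigma>\<^sup>2 * L / (\<sigma> * r) = \<sigma> * r / 2"
        using r \<sigma> by (simp add: field_simps power2_eq_square)
      then show ?thesis unfolding t_fun_def ts L_def[symmetric] by linarith
    qed
    have psi_ts: "real s * f \<le> psi p s ts \<sigma>"
    proof -
      have "ennreal f \<le> ennreal (gauss_tail \<sigma> 0)" unfolding f_def by (rule tail0_lb[OF \<sigma>])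
      then have g: "f \<le> gauss_tail \<sigma> 0" using f by (simp add: ennreal_le_iff2) 
      have "0 \<le> real (p - s) * gauss_tail \<sigma> (t_fun p s ts \<sigma>)" by (simp add: gauss_tail_def)
      moreover have "real s * f \<le> real s * gauss_tail \<sigma> (ts - t_fun p s ts \<sigma>)"
        using g tf by (intro mult_left_mono) auto
      ultimately show ?thesis unfolding psi_def by linarith
    qed
    have "C * Phi p s q \<sigma> a \<le> e / 4 * (real s * f) * ts powr q"
    proof -
      have "C * Phi p s q \<sigma> a = e * f / (4 * K) * (real s * ts powr q)"
        unfolding Phi rq C_def ts using \<sigma> r by (simp add: powr_mult)
      also have "\<dots> \<le> e * f / 4 * (real s * ts powr q)"
        using e0 f K by (intro mult_right_mono divide_left_mono) auto
      finally show ?thesis by (simp add: algebra_simps)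
    qed
    also have "\<dots> \<le> e / 4 * psi p s ts \<sigma> * ts powr q"
      using psi_ts e0 by (intro mult_right_mono mult_left_mono) auto
    also have "\<dots> = (ts/2) powr q * psi p s ts \<sigma> / 4" using ts0 by (simp add: half_powr e_def)
    finally have "ennreal (C * Phi p s q \<sigma> a) \<le> ennreal ((ts/2) powr q * psi p s ts \<sigma> / 4)"
      by (rule ennreal_leI)
    also have "\<dots> \<le> (SUP \<beta>\<in>Omega p s ts. risk p q \<sigma> est \<beta>)" by (rule caseA[OF est \<sigma> ts0 s q0])
    also have "\<dots> \<le> SUPR" unfolding SUPR_def
      using Omega_mono[of a ts p s] False by (intro SUP_subset_mono) (auto simp: ts_def)
    finally show ?thesis unfolding SUPR_def C_def e_def f_def .
  qed
qed


theorem proposition5: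
  fixes q :: real
  assumes "q \<ge> 1"
  shows "\<exists>C>0. \<forall>(p::nat) (s::nat) (a::real) (\<sigma>::real).
           a > 0 \<longrightarrow> \<sigma> > 0 \<longrightarrow> s \<ge> 1 \<longrightarrow> real s < real p / 2 \<longrightarrow>
           real s \<ge> 8 * q * ln (ln (real p)) \<longrightarrow>
           (INF est\<in>estimators p. SUP \<beta>\<in>Omega p s a. risk p q \<sigma> est \<beta>)
             \<ge> ennreal (C * Phi p s q \<sigma> a)"
proof -
  define K where "K = 1 + fact (2 * nat \<lceil>q\<rceil>) / (2 ^ nat \<lceil>q\<rceil> * fact (nat \<lceil>q\<rceil>) :: real)"
  define C where "C = 2 powr (-q) * std_normal_density 1 / (4 * K)"
  have K: "1 \<le> K" unfolding K_def by simp
  have C0: "C > 0" unfolding C_def using K phi1_bounds(1) by simp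
  show ?thesis
  proof (intro exI[of _ C] conjI allI impI)
    show "C > 0" by (rule C0)
  next
    fix p s :: nat and a \<sigma> :: real
    assume a: "a > 0" and \<sigma>: "\<sigma> > 0" and s: "s \<ge> 1" and sp: "real s < real p / 2"
    have s2: "2 * real s < real p" using sp by simp
    then have sp': "s < p" by linarith
    show "(INF est\<in>estimators p. SUP \<beta>\<in>Omega p s a. risk p q \<sigma> est \<beta>) \<ge> ennreal (C * Phi p s q \<sigma> a)"
    proof (rule INF_greatest)
      fix est assume est: "est \<in> estimators p"
      show "ennreal (C * Phi p s q \<sigma> a) \<le> (SUP \<beta>\<in>Omega p s a. risk p q \<sigma> est \<beta>)"
        using final_bound[OF assms est \<sigma> a s sp' s2] unfolding C_def K_def .
    qed
  qed
qed

end
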